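(* Let $X$ be a Dedekind complete Riesz space with weak order unit $e$ and let $x\in X^{s}_{+}$. Then $\bigwedge_{k=1}^{\infty}P_{(x-ke)^{+}}e=P_{x^{\infty}}e$.
   Context: For a Dedekind complete Riesz space $X$, its sup-completion $X^{s}$ is defined as follows: let $\mathcal{A}$ be the set of all nonempty upward directed subsets of $X$, with $A\sim B$ iff $\sup_{a\in A}(x\wedge a)=\sup_{b\in B}(x\wedge b)$ for all $x\in X$; $X^{s}=\mathcal{A}/\sim$ with the naturally induced addition, nonnegative scalar multiplication and order, $X$ being identified with a subset of $X^{s}$. $X^{s}$ is a lattice-ordered cone in which every nonempty subset has a supremum and every element is the supremum of the elements of $X$ below it; $X^{s}_{+}=\{x\ge 0\}$; $X^{u}$ is the universal completion of $X$ and $X^{u}_{+}\subseteq X^{s}$. For a band $B$ of $X$, $\infty_B$ is the supremum of $B$ in $X^{s}$. Every $x\in X^{s}_{+}$ can be written uniquely as $x=\infty_{B}+u$ with $B$ a band of $X$ and $u\in X^{u}$, $u\perp B$; one calls $x^{\infty}=\infty_B$ the infinite part and $x^{f}=u$ the finite part of $x$, and $P_{x^{\infty}}$ denotes the band projection onto $B$. For $z\in X^{s}_{+}$, $P_{z}$ denotes the band projection onto the band generated by $z$ (i.e. by the elements of $X^u_+$ below $z$). For $x\in X^s$, $(x-ke)^{+}=(x-ke)\vee 0$. *)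

theory Defs
  imports Complex_Main
begin

text \<open>A Dedekind complete Riesz space is modelled by a type of sort
  ordered_real_vector + conditionally_complete_lattice.\<close>

definition rabs :: "'a::{ordered_real_vector, lattice} \<Rightarrow> 'a" where
  "rabs x = sup x (- x)"

definition rdisj :: "'a::{ordered_real_vector, lattice} \<Rightarrow> 'a \<Rightarrow> bool" where
  "rdisj x y \<longleftrightarrow> inf (rabs x) (rabs y) = 0"

definition dcompl :: "'a::{ordered_real_vector, lattice} set \<Rightarrow> 'a set" where
  "dcompl S = {y. \<forall>x\<in>S. rdisj x y}"

definition riesz_ideal :: "'a::{ordered_real_vector, lattice} set \<Rightarrow> bool" where
  "riesz_ideal S \<longleftrightarrow> 0 \<in> S \<and> (\<forall>x\<in>S. \<forall>y\<in>S. x + y \<in> S)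
     \<and> (\<forall>c::real. \<forall>x\<in>S. c *\<^sub>R x \<in> S)
     \<and> (\<forall>x\<in>S. \<forall>y. rabs y \<le> rabs x \<longrightarrow> y \<in> S)"

text \<open>A band: an order closed ideal (closed under all suprema that exist in X;
  in a Dedekind complete space these are the suprema of nonempty bounded above sets).\<close>
definition band :: "'a::{ordered_real_vector, conditionally_complete_lattice} set \<Rightarrow> bool" where
  "band S \<longleftrightarrow> riesz_ideal S \<and> (\<forall>D. D \<subseteq> S \<and> D \<noteq> {} \<and> bdd_above D \<longrightarrow> Sup D \<in> S)"

definition band_gen :: "'a::{ordered_real_vector, conditionally_complete_lattice} set \<Rightarrow> 'a set" where
  "band_gen S = \<Inter> {B. band B \<and> S \<subseteq> B}"

definition band_proj :: "'a::{ordered_real_vector, conditionally_complete_lattice} set \<Rightarrow> 'a \<Rightarrow> 'a" where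
  "band_proj B y = (THE y1. y1 \<in> B \<and> y - y1 \<in> dcompl B)"

definition weak_unit :: "'a::{ordered_real_vector, conditionally_complete_lattice} \<Rightarrow> bool" where
  "weak_unit e \<longleftrightarrow> 0 \<le> e \<and> band_gen {e} = UNIV"

section \<open>Sup-completion, via representatives (nonempty upward directed sets)\<close>

definition up_directed :: "'a::order set \<Rightarrow> bool" where
  "up_directed A \<longleftrightarrow> A \<noteq> {} \<and> (\<forall>a\<in>A. \<forall>b\<in>A. \<exists>c\<in>A. a \<le> c \<and> b \<le> c)"

definition meet_sup :: "'a::conditionally_complete_lattice \<Rightarrow> 'a set \<Rightarrow> 'a" where
  "meet_sup x A = Sup ((\<lambda>a. inf x a) ` A)"

text \<open>Equality (the relation A ~ B) and order of the classes in X^s.\<close>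
definition sc_eq :: "'a::conditionally_complete_lattice set \<Rightarrow> 'a set \<Rightarrow> bool" where
  "sc_eq A B \<longleftrightarrow> (\<forall>x. meet_sup x A = meet_sup x B)"

definition sc_le :: "'a::conditionally_complete_lattice set \<Rightarrow> 'a set \<Rightarrow> bool" where
  "sc_le A B \<longleftrightarrow> (\<forall>x. meet_sup x A \<le> meet_sup x B)"

definition sc_add :: "'a::{ordered_real_vector, lattice} set \<Rightarrow> 'a set \<Rightarrow> 'a set" where
  "sc_add A B = {a + b | a b. a \<in> A \<and> b \<in> B}"

definition sc_pos :: "'a::{ordered_real_vector, conditionally_complete_lattice} set \<Rightarrow> bool" where
  "sc_pos A \<longleftrightarrow> sc_le {0} A"

text \<open>Representative of (x - k e)^+ = (x + (-k e)) sup 0, for x = [A].\<close>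
definition sc_pluspart :: "'a::{ordered_real_vector, lattice} set \<Rightarrow> nat \<Rightarrow> 'a \<Rightarrow> 'a set" where
  "sc_pluspart A k e = (\<lambda>a. sup (a - real k *\<^sub>R e) 0) ` A"

text \<open>Positive elements of X below z = [A]; they generate the band of z.\<close>
definition sc_below :: "'a::{ordered_real_vector, conditionally_complete_lattice} set \<Rightarrow> 'a set" where
  "sc_below A = {y. 0 \<le> y \<and> sc_le {y} A}"

text \<open>Elements of X^u_+ inside X^s_+: those with no infinite part.\<close>
definition sc_finite :: "'a::{ordered_real_vector, conditionally_complete_lattice} set \<Rightarrow> bool" where
  "sc_finite C \<longleftrightarrow> (\<forall>y. 0 < y \<longrightarrow> \<not> (\<forall>n::nat. sc_le {real n *\<^sub>R y} C))"

text \<open>B is the band of the infinite part of x = [A]: x = infty_B + u, u in X^u_+, u disjoint from B.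
  Note infty_B = Sup B in X^s is represented by the directed set B itself.\<close>
definition inf_part_band :: "'a::{ordered_real_vector, conditionally_complete_lattice} set \<Rightarrow> 'a set \<Rightarrow> bool" where
  "inf_part_band A B \<longleftrightarrow> band B \<and>
     (\<exists>C. up_directed C \<and> sc_pos C \<and> sc_finite C
        \<and> (\<forall>b\<in>B. sc_eq ((\<lambda>c. inf c (rabs b)) ` C) {0})
        \<and> sc_eq A (sc_add B C))"

end

theory Submission
  imports Defs
begin


lemma inf_add_r: fixes a b c :: "'a::{ordered_ab_group_add, lattice}"
  shows "inf (a + c) (b + c) = inf a b + c"
proof (rule antisym)
  have "inf (a + c) (b + c) - c \<le> a" by (simp add: diff_le_eq)
  moreover have "inf (a + c) (b + c) - c \<le> b" by (simp add: diff_le_eq)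
  ultimately have "inf (a + c) (b + c) - c \<le> inf a b" by simp
  then show "inf (a + c) (b + c) \<le> inf a b + c" using diff_le_eq by blast
  show "inf a b + c \<le> inf (a + c) (b + c)" by (intro le_infI add_right_mono; simp)
qed

lemma sup_add_r: fixes a b c :: "'a::{ordered_ab_group_add, lattice}"
  shows "sup (a + c) (b + c) = sup a b + c"
proof (rule antisym)
  have "a \<le> sup (a + c) (b + c) - c" by (simp add: le_diff_eq)
  moreover have "b \<le> sup (a + c) (b + c) - c" by (simp add: le_diff_eq)
  ultimately have "sup a b \<le> sup (a + c) (b + c) - c" by simp
  then show "sup a b + c \<le> sup (a + c) (b + c)" by (simp add: le_diff_eq)
  show "sup (a + c) (b + c) \<le> sup a b + c" by (intro sup_least add_right_mono; simp)
qed

lemma inf_add_l: fixes a b c :: "'a::{ordered_ab_group_add, lattice}"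
  shows "inf (c + a) (c + b) = c + inf a b"
  using inf_add_r[of a c b] by (simp add: add.commute)

lemma sup_add_l: fixes a b c :: "'a::{ordered_ab_group_add, lattice}"
  shows "sup (c + a) (c + b) = c + sup a b"
  using sup_add_r[of a c b] by (simp add: add.commute)

lemma neg_sup: fixes a b :: "'a::{ordered_ab_group_add, lattice}"
  shows "- sup a b = inf (- a) (- b)"
proof (rule antisym)
  show "- sup a b \<le> inf (- a) (- b)" by simp
  have "a \<le> - inf (- a) (- b)" using le_minus_iff inf_le1 by metis
  moreover have "b \<le> - inf (- a) (- b)" using le_minus_iff inf_le2 by metis
  ultimately have "sup a b \<le> - inf (- a) (- b)" by simp
  then show "inf (- a) (- b) \<le> - sup a b" using le_minus_iff by metis
qed

lemma neg_inf: fixes a b :: "'a::{ordered_ab_group_add, lattice}"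
  shows "- inf a b = sup (- a) (- b)"
  using neg_sup[of "-a" "-b"] by (metis minus_minus)

lemma inf_plus_sup: fixes a b :: "'a::{ordered_ab_group_add, lattice}"
  shows "inf a b + sup a b = a + b"
proof -
  have "sup a b = sup (a + b - b) (a + b - a)" by (simp add: sup_commute)
  also have "\<dots> = a + b + sup (- b) (- a)"
    using sup_add_l[of "a+b" "-b" "-a"] by simp
  also have "\<dots> = a + b - inf a b" using neg_inf[of b a] by (simp add: inf_commute)
  finally show ?thesis by (simp add: algebra_simps)
qed

lemma scale_sup: fixes a b :: "'a::{ordered_real_vector, lattice}"
  assumes "0 \<le> c" shows "c *\<^sub>R sup a b = sup (c *\<^sub>R a) (c *\<^sub>R b)"
proof (cases "c = 0")
  case True then show ?thesis by simp
next
  case False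
  then have cp: "0 < c" using assms by simp
  let ?u = "sup (c *\<^sub>R a) (c *\<^sub>R b)"
  have ia: "inverse c *\<^sub>R (c *\<^sub>R x) = x" for x :: 'a using cp by simp
  show ?thesis
  proof (rule antisym)
    have "a \<le> inverse c *\<^sub>R ?u"
      using scaleR_left_mono[of "c *\<^sub>R a" ?u "inverse c"] cp ia[of a] by simp
    moreover have "b \<le> inverse c *\<^sub>R ?u"
      using scaleR_left_mono[of "c *\<^sub>R b" ?u "inverse c"] cp ia[of b] by simp
    ultimately have "sup a b \<le> inverse c *\<^sub>R ?u" by simp
    then have "c *\<^sub>R sup a b \<le> c *\<^sub>R (inverse c *\<^sub>R ?u)"
      using scaleR_left_mono[of "sup a b" _ c] cp by (meson less_imp_le)
    also have "c *\<^sub>R (inverse c *\<^sub>R ?u) = ?u" using cp by (simp add: scaleR_scaleR)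
    finally show "c *\<^sub>R sup a b \<le> ?u" .
  next
    show "?u \<le> c *\<^sub>R sup a b"
      by (intro sup_least scaleR_left_mono; simp add: assms)
  qed
qed

lemma scale_inf: fixes a b :: "'a::{ordered_real_vector, lattice}"
  assumes "0 \<le> c" shows "c *\<^sub>R inf a b = inf (c *\<^sub>R a) (c *\<^sub>R b)"
proof -
  have "inf a b = - sup (-a) (-b)" using neg_sup[of "-a" "-b"] by simp
  then have "c *\<^sub>R inf a b = - (c *\<^sub>R sup (-a) (-b))" by simp
  also have "\<dots> = - sup (- (c *\<^sub>R a)) (- (c *\<^sub>R b))" by (simp add: scale_sup[OF assms])
  also have "\<dots> = inf (c *\<^sub>R a) (c *\<^sub>R b)"
    using neg_sup[of "- (c *\<^sub>R a)" "- (c *\<^sub>R b)"] by simp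
  finally show ?thesis .
qed

lemma rabs_nonneg: "0 \<le> rabs (x::'a::{ordered_real_vector, lattice})"
proof -
  have "x \<le> rabs x" "- x \<le> rabs x" by (auto simp: rabs_def)
  then have "0 \<le> rabs x + rabs x" using add_mono[of x "rabs x" "-x" "rabs x"] by simp
  then have "0 \<le> (2::real) *\<^sub>R rabs x" by (simp add: scaleR_2)
  then have "0 \<le> inverse 2 *\<^sub>R ((2::real) *\<^sub>R rabs x)"
    using scaleR_nonneg_nonneg[of "inverse 2"] by (simp del: scaleR_scaleR)
  then show ?thesis by (simp add: scaleR_scaleR)
qed

lemma rabs_ge: "x \<le> rabs (x::'a::{ordered_real_vector, lattice})"
  "- x \<le> rabs x" by (auto simp: rabs_def)

lemma rabs_pos: "0 \<le> x \<Longrightarrow> rabs (x::'a::{ordered_real_vector, lattice}) = x"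
  unfolding rabs_def by (rule sup_absorb1) (meson neg_le_0_iff_le order_trans)

lemma rabs_least: "x \<le> u \<Longrightarrow> - x \<le> u \<Longrightarrow> rabs (x::'a::{ordered_real_vector, lattice}) \<le> u"
  unfolding rabs_def by simp

lemma rabs_rabs: "rabs (rabs (x::'a::{ordered_real_vector, lattice})) = rabs x"
  by (rule rabs_pos[OF rabs_nonneg])

lemma rabs_minus: "rabs (- (x::'a::{ordered_real_vector, lattice})) = rabs x"
  by (simp add: rabs_def sup_commute)

lemma rabs_triangle: "rabs (x + y) \<le> rabs x + rabs (y::'a::{ordered_real_vector, lattice})"
proof (rule rabs_least)
  show "x + y \<le> rabs x + rabs y" by (intro add_mono rabs_ge)
  have "- x + - y \<le> rabs x + rabs y" by (intro add_mono rabs_ge)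
  then show "- (x + y) \<le> rabs x + rabs y" by (simp add: minus_add_distrib add.commute)
qed

lemma rabs_zero: "rabs (x::'a::{ordered_real_vector, lattice}) = 0 \<Longrightarrow> x = 0"
  using rabs_ge[of x] by (metis antisym neg_le_0_iff_le)

lemma rabs_scale_pos: "0 \<le> c \<Longrightarrow> rabs (c *\<^sub>R (x::'a::{ordered_real_vector, lattice})) = c *\<^sub>R rabs x"
  by (simp add: rabs_def scale_sup)

lemma rabs_scale: "rabs (c *\<^sub>R (x::'a::{ordered_real_vector, lattice})) = \<bar>c\<bar> *\<^sub>R rabs x"
proof (cases "0 \<le> c")
  case True then show ?thesis by (simp add: rabs_scale_pos)
next
  case False
  have "c *\<^sub>R x = (-c) *\<^sub>R (- x)" by simp
  then have "rabs (c *\<^sub>R x) = (-c) *\<^sub>R rabs (-x)" using False rabs_scale_pos[of "-c" "-x"] by simp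
  then show ?thesis using False by (simp add: rabs_minus)
qed

lemma riesz_ineq: fixes u v w :: "'a::{ordered_real_vector, lattice}"
  assumes "0 \<le> u" "0 \<le> v" "0 \<le> w"
  shows "inf u (v + w) \<le> inf u v + inf u w"
proof -
  have "inf u (v + w) - w = inf (u - w) v"
    using inf_add_r[of "u - w" w v] by (simp add: algebra_simps)
  also have "\<dots> \<le> inf u v" using assms by (meson diff_le_eq inf_mono le_add_same_cancel1 order_refl)
  finally have 0: "inf u (v + w) - w \<le> inf u v" .
  have 1: "inf u (v + w) \<le> inf u v + w" using 0 diff_le_eq by blast
  have 2: "inf u (v + w) \<le> inf u v + u" using assms by (simp add: add_increasing le_infI1)
  have "inf u (v + w) \<le> inf (inf u v + w) (inf u v + u)" using 1 2 by simp
  also have "\<dots> = inf u v + inf w u" by (rule inf_add_l)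
  finally show ?thesis by (simp add: inf_commute)
qed

lemma disj_le: fixes u v w :: "'a::{ordered_real_vector, lattice}"
  assumes "0 \<le> u" "0 \<le> v" "0 \<le> w" "u \<le> v + w" "inf u w = 0"
  shows "u \<le> v"
proof -
  have "u = inf u (v + w)" using assms by (simp add: inf_absorb1)
  also have "\<dots> \<le> inf u v + inf u w" by (rule riesz_ineq) (use assms in auto)
  finally show ?thesis using assms by (simp add: le_infI2)
qed



lemma inf_Sup: fixes S :: "'a::{ordered_real_vector, conditionally_complete_lattice} set"
  assumes ne: "S \<noteq> {}" and bd: "bdd_above S"
  shows "inf r (Sup S) = Sup ((inf r) ` S)"
proof (rule antisym)
  let ?u = "Sup ((inf r) ` S)"
  have bdi: "bdd_above ((inf r) ` S)" by (rule bdd_aboveI[of _ r]) auto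
  have "s \<le> ?u + sup r (Sup S) - r" if "s \<in> S" for s
  proof -
    have "s = inf r s + sup r s - r" using inf_plus_sup[of r s] by (simp add: algebra_simps)
    also have "\<dots> \<le> ?u + sup r (Sup S) - r"
      by (intro diff_right_mono add_mono cSUP_upper that bdi sup_mono order_refl cSup_upper bd)
    finally show ?thesis .
  qed
  then have "Sup S \<le> ?u + sup r (Sup S) - r" by (intro cSup_least ne) auto
  then have "Sup S + (r - sup r (Sup S)) \<le> ?u + sup r (Sup S) - r + (r - sup r (Sup S))"
    by (rule add_right_mono)
  moreover have "?u + sup r (Sup S) - r + (r - sup r (Sup S)) = ?u" by (simp add: algebra_simps)
  moreover have "Sup S + (r - sup r (Sup S)) = r + Sup S - sup r (Sup S)" by (simp add: algebra_simps)
  ultimately have "r + Sup S - sup r (Sup S) \<le> ?u" by simp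
  moreover have "inf r (Sup S) = r + Sup S - sup r (Sup S)"
    using inf_plus_sup[of r "Sup S"] by (simp add: algebra_simps)
  ultimately show "inf r (Sup S) \<le> ?u" by simp
next
  show "Sup ((inf r) ` S) \<le> inf r (Sup S)"
    using ne by (intro cSUP_least) (auto intro: le_infI2[OF cSup_upper[OF _ bd]])
qed

lemma sup_Sup: fixes S :: "'a::conditionally_complete_lattice set"
  assumes ne: "S \<noteq> {}" and bd: "bdd_above S"
  shows "sup (Sup S) a = Sup ((\<lambda>s. sup s a) ` S)"
proof (rule antisym)
  have bdi: "bdd_above ((\<lambda>s. sup s a) ` S)"
    by (rule bdd_aboveI[of _ "sup (Sup S) a"]) (auto intro: sup_mono cSup_upper[OF _ bd])
  have "Sup S \<le> Sup ((\<lambda>s. sup s a) ` S)"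
    by (intro cSup_least ne) (rule cSUP_upper2[OF bdi _ sup_ge1])
  moreover obtain s0 where "s0 \<in> S" using ne by auto
  then have "a \<le> Sup ((\<lambda>s. sup s a) ` S)" by (rule cSUP_upper2[OF bdi _ sup_ge2])
  ultimately show "sup (Sup S) a \<le> Sup ((\<lambda>s. sup s a) ` S)" by simp
next
  show "Sup ((\<lambda>s. sup s a) ` S) \<le> sup (Sup S) a"
    using ne by (intro cSUP_least) (auto intro: sup_mono le_supI1[OF cSup_upper[OF _ bd]])
qed

lemma Sup_translate: fixes S :: "'a::{ordered_real_vector, conditionally_complete_lattice} set"
  assumes ne: "S \<noteq> {}" and bd: "bdd_above S"
  shows "Sup ((\<lambda>s. s + t) ` S) = Sup S + t"
proof (rule antisym)
  show "Sup ((\<lambda>s. s + t) ` S) \<le> Sup S + t"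
    using ne by (intro cSUP_least) (auto intro: add_right_mono cSup_upper[OF _ bd])
  have bdi: "bdd_above ((\<lambda>s. s + t) ` S)"
    by (rule bdd_aboveI[of _ "Sup S + t"]) (auto intro: add_right_mono cSup_upper[OF _ bd])
  have "Sup S \<le> Sup ((\<lambda>s. s + t) ` S) - t"
    by (intro cSup_least ne) (metis bdi cSUP_upper le_diff_eq)
  then show "Sup S + t \<le> Sup ((\<lambda>s. s + t) ` S)" by (simp add: le_diff_eq)
qed

lemma archimedean: fixes w u :: "'a::{ordered_real_vector, conditionally_complete_lattice}"
  assumes "0 \<le> w" and le: "\<And>n::nat. real n *\<^sub>R w \<le> u"
  shows "w = 0"
proof -
  let ?D = "range (\<lambda>n::nat. real n *\<^sub>R w)"
  have bd: "bdd_above ?D" by (rule bdd_aboveI[of _ u]) (auto intro: le)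
  have "real n *\<^sub>R w \<le> Sup ?D - w" for n
  proof -
    have "real (Suc n) *\<^sub>R w \<le> Sup ?D" by (intro cSUP_upper bd) auto
    moreover have "real (Suc n) *\<^sub>R w = real n *\<^sub>R w + w" by (simp add: algebra_simps)
    ultimately show ?thesis by (simp add: le_diff_eq)
  qed
  then have "Sup ?D \<le> Sup ?D - w" by (intro cSUP_least) auto
  then have "w \<le> 0" by (simp add: le_diff_eq)
  with assms show ?thesis by simp
qed

section \<open>Ideals and bands\<close>

lemma ideal_0: "riesz_ideal I \<Longrightarrow> 0 \<in> I" by (simp add: riesz_ideal_def)
lemma ideal_add: "riesz_ideal I \<Longrightarrow> x \<in> I \<Longrightarrow> y \<in> I \<Longrightarrow> x + y \<in> I" by (simp add: riesz_ideal_def)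
lemma ideal_scale: "riesz_ideal I \<Longrightarrow> x \<in> I \<Longrightarrow> c *\<^sub>R x \<in> I" by (simp add: riesz_ideal_def)
lemma ideal_solid: "riesz_ideal I \<Longrightarrow> x \<in> I \<Longrightarrow> rabs y \<le> rabs x \<Longrightarrow> y \<in> I"
  unfolding riesz_ideal_def by blast
lemma ideal_diff: "riesz_ideal I \<Longrightarrow> x \<in> I \<Longrightarrow> y \<in> I \<Longrightarrow> x - y \<in> I"
  using ideal_add[of I x "(-1) *\<^sub>R y"] ideal_scale[of I y "-1"] by simp
lemma ideal_rabs: "riesz_ideal I \<Longrightarrow> x \<in> I \<Longrightarrow> rabs x \<in> I"
  by (erule ideal_solid) (auto simp: rabs_rabs)
lemma ideal_rabsD: "riesz_ideal I \<Longrightarrow> rabs x \<in> I \<Longrightarrow> x \<in> I"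
  by (erule ideal_solid) (auto simp: rabs_rabs)
lemma ideal_pos_le: "riesz_ideal I \<Longrightarrow> x \<in> I \<Longrightarrow> 0 \<le> y \<Longrightarrow> y \<le> x \<Longrightarrow> y \<in> I"
  by (erule ideal_solid) (auto simp: rabs_pos intro: order_trans[OF _ rabs_ge(1)])

lemma band_ideal: "band B \<Longrightarrow> riesz_ideal B" by (simp add: band_def)
lemma band_Sup: "band B \<Longrightarrow> D \<subseteq> B \<Longrightarrow> D \<noteq> {} \<Longrightarrow> bdd_above D \<Longrightarrow> Sup D \<in> B"
  by (simp add: band_def)

lemma rdisj_pos: "0 \<le> x \<Longrightarrow> 0 \<le> y \<Longrightarrow> rdisj x y \<longleftrightarrow> inf x y = 0"
  by (simp add: rdisj_def rabs_pos)

lemma rabs_zero_eq: "rabs (0::'a::{ordered_real_vector, lattice}) = 0"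
  by (simp add: rabs_pos)

lemma rdisj_self: "rdisj x x \<Longrightarrow> x = 0"
  by (simp add: rdisj_def rabs_zero)

lemma dcompl_ideal: "riesz_ideal (dcompl (S::'a::{ordered_real_vector, lattice} set))"
  unfolding riesz_ideal_def
proof (intro conjI ballI allI impI)
  show "0 \<in> dcompl S"
    by (simp add: dcompl_def rdisj_def rabs_zero_eq inf_absorb2 rabs_nonneg)
next
  fix u v assume u: "u \<in> dcompl S" and v: "v \<in> dcompl S"
  show "u + v \<in> dcompl S" unfolding dcompl_def
  proof (intro CollectI ballI)
    fix x assume x: "x \<in> S"
    have "inf (rabs x) (rabs (u + v)) \<le> inf (rabs x) (rabs u + rabs v)"
      by (intro inf_mono order_refl rabs_triangle)
    also have "\<dots> \<le> inf (rabs x) (rabs u) + inf (rabs x) (rabs v)"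
      by (intro riesz_ineq rabs_nonneg)
    also have "\<dots> = 0" using u v x by (simp add: dcompl_def rdisj_def)
    finally show "rdisj x (u + v)" unfolding rdisj_def
      by (intro antisym) (auto intro: rabs_nonneg)
  qed
next
  fix c :: real and u assume u: "u \<in> dcompl S"
  show "c *\<^sub>R u \<in> dcompl S" unfolding dcompl_def
  proof (intro CollectI ballI)
    fix x assume x: "x \<in> S"
    have z: "inf (rabs x) (rabs u) = 0" using u x by (simp add: dcompl_def rdisj_def)
    have "inf (rabs x) (\<bar>c\<bar> *\<^sub>R rabs u) \<le> 0"
    proof (cases "\<bar>c\<bar> \<le> 1")
      case True
      then have "\<bar>c\<bar> *\<^sub>R rabs u \<le> rabs u" by (intro scaleR_left_le_one_le rabs_nonneg)
      then have "inf (rabs x) (\<bar>c\<bar> *\<^sub>R rabs u) \<le> inf (rabs x) (rabs u)" by (intro inf_mono) auto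
      then show ?thesis using z by simp
    next
      case False
      then have "rabs x \<le> \<bar>c\<bar> *\<^sub>R rabs x"
        using scaleR_right_mono[of 1 "\<bar>c\<bar>" "rabs x"] rabs_nonneg[of x] by simp
      then have "inf (rabs x) (\<bar>c\<bar> *\<^sub>R rabs u) \<le> inf (\<bar>c\<bar> *\<^sub>R rabs x) (\<bar>c\<bar> *\<^sub>R rabs u)"
        by (intro inf_mono) auto
      also have "\<dots> = \<bar>c\<bar> *\<^sub>R inf (rabs x) (rabs u)" by (simp add: scale_inf)
      finally show ?thesis using z by simp
    qed
    then show "rdisj x (c *\<^sub>R u)" unfolding rdisj_def rabs_scale
      by (intro antisym) (auto intro: rabs_nonneg scaleR_nonneg_nonneg)
  qed
next
  fix u y assume u: "u \<in> dcompl S" and le: "rabs y \<le> rabs u"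
  show "y \<in> dcompl S" unfolding dcompl_def
  proof (intro CollectI ballI)
    fix x assume x: "x \<in> S"
    have "inf (rabs x) (rabs y) \<le> inf (rabs x) (rabs u)" using le by (intro inf_mono) auto
    also have "\<dots> = 0" using u x by (simp add: dcompl_def rdisj_def)
    finally show "rdisj x y" unfolding rdisj_def
      by (intro antisym) (auto intro: rabs_nonneg)
  qed
qed

lemma dcompl_band: "band (dcompl (S::'a::{ordered_real_vector, conditionally_complete_lattice} set))"
  unfolding band_def
proof (intro conjI dcompl_ideal allI impI)
  fix D assume D: "D \<subseteq> dcompl S \<and> D \<noteq> {} \<and> bdd_above D"
  then have sub: "D \<subseteq> dcompl S" and ne: "D \<noteq> {}" and bd: "bdd_above D" by auto
  let ?s = "Sup D"
  show "?s \<in> dcompl S" unfolding dcompl_def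
  proof (intro CollectI ballI)
    fix x assume x: "x \<in> S"
    have dj: "inf (rabs x) (rabs d) = 0" if "d \<in> D" for d
      using sub that x by (auto simp: dcompl_def rdisj_def)
    have sp: "sup ?s 0 = Sup ((\<lambda>d. sup d 0) ` D)" by (rule sup_Sup[OF ne bd])
    have bd2: "bdd_above ((\<lambda>d. sup d 0) ` D)"
      by (rule bdd_aboveI[of _ "sup ?s 0"]) (auto intro: sup_mono cSup_upper[OF _ bd])
    have "inf (rabs x) (sup ?s 0) = Sup (inf (rabs x) ` (\<lambda>d. sup d 0) ` D)"
      unfolding sp using ne bd2 by (intro inf_Sup) auto
    also have "\<dots> \<le> 0"
    proof (rule cSup_least)
      show "inf (rabs x) ` (\<lambda>d. sup d 0) ` D \<noteq> {}" using ne by auto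
    next
      fix t assume "t \<in> inf (rabs x) ` (\<lambda>d. sup d 0) ` D"
      then obtain d where d: "d \<in> D" and t: "t = inf (rabs x) (sup d 0)" by auto
      have "sup d 0 \<le> rabs d" by (simp add: rabs_ge rabs_nonneg)
      then have "t \<le> inf (rabs x) (rabs d)" unfolding t by (intro inf_mono) auto
      then show "t \<le> 0" using dj[OF d] by simp
    qed
    finally have p1: "inf (rabs x) (sup ?s 0) \<le> 0" .
    obtain d0 where d0: "d0 \<in> D" using ne by auto
    have "d0 \<le> ?s" by (intro cSup_upper d0 bd)
    then have "sup (- ?s) 0 \<le> rabs d0"
      by (intro sup_least) (auto intro: order_trans[OF _ rabs_ge(2)] rabs_nonneg)
    then have "inf (rabs x) (sup (- ?s) 0) \<le> inf (rabs x) (rabs d0)" by (intro inf_mono) auto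
    then have p2: "inf (rabs x) (sup (- ?s) 0) \<le> 0" using dj[OF d0] by simp
    have "rabs ?s \<le> sup ?s 0 + sup (- ?s) 0"
    proof (rule rabs_least)
      show "?s \<le> sup ?s 0 + sup (- ?s) 0" by (intro add_increasing2) auto
      show "- ?s \<le> sup ?s 0 + sup (- ?s) 0" by (intro add_increasing) auto
    qed
    then have "inf (rabs x) (rabs ?s) \<le> inf (rabs x) (sup ?s 0 + sup (- ?s) 0)"
      by (intro inf_mono) auto
    also have "\<dots> \<le> inf (rabs x) (sup ?s 0) + inf (rabs x) (sup (- ?s) 0)"
      by (intro riesz_ineq rabs_nonneg) auto
    also have "\<dots> \<le> 0" using p1 p2 by (simp add: add_nonpos_nonpos)
    finally show "rdisj x ?s" unfolding rdisj_def
      by (intro antisym) (auto intro: rabs_nonneg)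
  qed
qed

lemma band_gen_mem: "x \<in> band_gen S \<Longrightarrow> band B \<Longrightarrow> S \<subseteq> B \<Longrightarrow> x \<in> B"
  by (auto simp: band_gen_def)

lemma band_gen_band: "band (band_gen (S::'a::{ordered_real_vector, conditionally_complete_lattice} set))"
  unfolding band_def riesz_ideal_def
proof (intro conjI ballI allI impI)
  show "0 \<in> band_gen S" unfolding band_gen_def
    by (intro InterI) (auto intro: ideal_0 band_ideal)
  show "x + y \<in> band_gen S" if "x \<in> band_gen S" "y \<in> band_gen S" for x y
    using that
    by (subst band_gen_def, intro InterI) (auto intro: ideal_add[OF band_ideal] band_gen_mem)
  show "c *\<^sub>R x \<in> band_gen S" if "x \<in> band_gen S" for x and c :: real
    using that
    by (subst band_gen_def, intro InterI) (auto intro: ideal_scale[OF band_ideal] band_gen_mem)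
  show "y \<in> band_gen S" if "x \<in> band_gen S" "rabs y \<le> rabs x" for x y
    using that
    by (subst band_gen_def, intro InterI) (auto intro: ideal_solid[OF band_ideal] band_gen_mem)
  show "Sup D \<in> band_gen S" if "D \<subseteq> band_gen S \<and> D \<noteq> {} \<and> bdd_above D" for D
    unfolding band_gen_def
  proof (intro InterI)
    fix B assume B: "B \<in> {B. band B \<and> S \<subseteq> B}"
    have "D \<subseteq> B" using that B unfolding band_gen_def by blast
    then show "Sup D \<in> B" using that B by (auto intro: band_Sup)
  qed
qed

lemma band_gen_sub: "S \<subseteq> band_gen S" by (auto simp: band_gen_def)
lemma band_gen_least: "band G \<Longrightarrow> S \<subseteq> G \<Longrightarrow> band_gen S \<subseteq> G" by (auto simp: band_gen_def)



lemma proj_exists: fixes y :: "'a::{ordered_real_vector, conditionally_complete_lattice}"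
  assumes B: "band B" and y: "0 \<le> y"
  shows "\<exists>y1. y1 \<in> B \<and> y - y1 \<in> dcompl B \<and> 0 \<le> y1 \<and> y1 \<le> y"
proof -
  let ?D = "{b \<in> B. 0 \<le> b \<and> b \<le> y}"
  have I: "riesz_ideal B" using B by (rule band_ideal)
  have ne: "?D \<noteq> {}" using ideal_0[OF I] y by auto
  have bd: "bdd_above ?D" by (rule bdd_aboveI[of _ y]) auto
  define y1 where "y1 = Sup ?D"
  have y1B: "y1 \<in> B" unfolding y1_def by (rule band_Sup[OF B _ ne bd]) auto
  have y1le: "y1 \<le> y" unfolding y1_def by (rule cSup_least[OF ne]) auto
  have y1ge: "0 \<le> y1" unfolding y1_def using ideal_0[OF I] y by (intro cSup_upper[OF _ bd]) auto
  have "y - y1 \<in> dcompl B" unfolding dcompl_def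
  proof (intro CollectI ballI)
    fix b assume b: "b \<in> B"
    have yy: "0 \<le> y - y1" using y1le by simp
    define d where "d = inf (rabs b) (y - y1)"
    have d0: "0 \<le> d" unfolding d_def using yy rabs_nonneg[of b] by simp
    have dB: "d \<in> B" 
      by (rule ideal_pos_le[OF I ideal_rabs[OF I b] d0]) (simp add: d_def)
    have "y1 + d \<in> ?D"
    proof (intro CollectI conjI)
      show "y1 + d \<in> B" by (rule ideal_add[OF I y1B dB])
      show "0 \<le> y1 + d" using y1ge d0 by simp
      have "d \<le> y - y1" by (simp add: d_def)
      then show "y1 + d \<le> y" by (simp add: le_diff_eq add.commute)
    qed
    then have "y1 + d \<le> y1" unfolding y1_def by (intro cSup_upper[OF _ bd])
    then have "d = 0" using d0 by simp
    then show "rdisj b (y - y1)" unfolding rdisj_def d_def using rabs_pos[OF yy] by simp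
  qed
  then show ?thesis using y1B y1ge y1le by blast
qed

lemma proj_unique: fixes y :: "'a::{ordered_real_vector, conditionally_complete_lattice}"
  assumes B: "band B" and "y1 \<in> B" "y - y1 \<in> dcompl B" "y2 \<in> B" "y - y2 \<in> dcompl B"
  shows "y2 = y1"
proof -
  have I: "riesz_ideal B" using B by (rule band_ideal)
  have "y2 - y1 \<in> B" using assms by (intro ideal_diff[OF I])
  moreover have "y2 - y1 \<in> dcompl B"
    using ideal_diff[OF dcompl_ideal, of "y - y1" B "y - y2"] assms by simp
  ultimately have "rdisj (y2 - y1) (y2 - y1)" by (auto simp: dcompl_def)
  then show ?thesis using rdisj_self by fastforce
qed

lemma band_proj: fixes y :: "'a::{ordered_real_vector, conditionally_complete_lattice}"
  assumes B: "band B" and y: "0 \<le> y"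
  shows "band_proj B y \<in> B \<and> y - band_proj B y \<in> dcompl B \<and> 0 \<le> band_proj B y \<and> band_proj B y \<le> y"
proof -
  obtain y1 where y1: "y1 \<in> B" "y - y1 \<in> dcompl B" "0 \<le> y1" "y1 \<le> y"
    using proj_exists[OF B y] by blast
  have "band_proj B y = y1" unfolding band_proj_def
    by (rule the_equality) (use y1 proj_unique[OF B] in auto)
  then show ?thesis using y1 by simp
qed

lemma proj_max: fixes e :: "'a::{ordered_real_vector, conditionally_complete_lattice}"
  assumes G: "band G" and e: "0 \<le> e" and u: "u \<in> G" "0 \<le> u" "u \<le> e"
  shows "u \<le> band_proj G e"
proof -
  have p: "band_proj G e \<in> G" "e - band_proj G e \<in> dcompl G" "0 \<le> band_proj G e" "band_proj G e \<le> e"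
    using band_proj[OF G e] by auto
  have "rdisj u (e - band_proj G e)" using p(2) u(1) by (auto simp: dcompl_def)
  then have "inf u (e - band_proj G e) = 0" using u p by (simp add: rdisj_pos)
  then show ?thesis
    by (intro disj_le[of u "band_proj G e" "e - band_proj G e"]) (use u p in auto)
qed

lemma inf_sup_distr: fixes x c d :: "'a::{ordered_real_vector, conditionally_complete_lattice}"
  shows "inf x (sup c d) = sup (inf x c) (inf x d)"
proof -
  have "Sup {c, d} = sup c d" by (simp add: cSup_insert)
  moreover have "Sup {inf x c, inf x d} = sup (inf x c) (inf x d)" by (simp add: cSup_insert)
  moreover have "inf x (Sup {c, d}) = Sup (inf x ` {c, d})" by (rule inf_Sup) auto
  ultimately show ?thesis by simp
qed

lemma diff_sup: fixes b p q :: "'a::{ordered_ab_group_add, lattice}"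
  shows "b - sup p q = inf (b - p) (b - q)"
  using inf_add_l[of b "-p" "-q"] neg_sup[of p q] by simp

lemma diff_inf: fixes b p q :: "'a::{ordered_ab_group_add, lattice}"
  shows "b - inf p q = sup (b - p) (b - q)"
  using sup_add_l[of b "-p" "-q"] neg_inf[of p q] by simp

lemma pos_neg_disj: fixes u :: "'a::{ordered_ab_group_add, lattice}"
  shows "inf (sup u 0) (sup (- u) 0) = 0"
proof -
  have n: "sup (- u) 0 = - inf u 0" using neg_inf[of u 0] by simp
  have "sup u 0 = u + sup (- u) 0"
    using inf_plus_sup[of u 0] n by (simp add: algebra_simps)
  then have "inf (sup u 0) (sup (- u) 0) = inf (u + sup (- u) 0) (0 + sup (- u) 0)" by simp
  also have "\<dots> = inf u 0 + sup (- u) 0" by (rule inf_add_r)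
  also have "\<dots> = 0" using n by simp
  finally show ?thesis .
qed

lemma meet_sup_single: "meet_sup x {y} = inf x y" by (simp add: meet_sup_def)

lemma meet_sup_bdd: "bdd_above ((inf (x::'a::lattice)) ` A)" by (rule bdd_aboveI[of _ x]) auto

lemma meet_sup_upper: "a \<in> A \<Longrightarrow> inf x a \<le> meet_sup x A"
  unfolding meet_sup_def by (intro cSUP_upper meet_sup_bdd)

lemma meet_sup_least: "A \<noteq> {} \<Longrightarrow> (\<And>a. a \<in> A \<Longrightarrow> inf x a \<le> M) \<Longrightarrow> meet_sup x A \<le> M"
  unfolding meet_sup_def by (intro cSUP_least) auto

lemma meet_sup_le_x: "A \<noteq> {} \<Longrightarrow> meet_sup x A \<le> x"
  by (rule meet_sup_least) auto

lemma sc_pos_D: "sc_pos C \<Longrightarrow> inf x 0 \<le> meet_sup x C"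
  unfolding sc_pos_def sc_le_def using meet_sup_single[of x 0] by metis



lemma step2: fixes w :: "'a::{ordered_real_vector, conditionally_complete_lattice}"
  assumes eq: "sc_eq A (sc_add B C)" and B: "band B" and Cne: "C \<noteq> {}" and Cpos: "sc_pos C"
    and w0: "0 \<le> w" and wB: "w \<in> dcompl B" and wA: "\<And>x. inf x w \<le> meet_sup x A"
  shows "sc_le {w} C"
  unfolding sc_le_def meet_sup_single
proof
  fix x
  let ?x' = "inf x w"
  have "inf x w = inf ?x' w" by (simp add: inf_absorb1)
  also have "\<dots> \<le> meet_sup ?x' A" by (rule wA)
  also have "\<dots> = meet_sup ?x' (sc_add B C)" using eq by (simp add: sc_eq_def)
  also have "\<dots> \<le> meet_sup x C"
  proof (rule meet_sup_least)
    obtain c0 where "c0 \<in> C" using Cne by auto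
    then have "0 + c0 \<in> sc_add B C" using ideal_0[OF band_ideal[OF B]] unfolding sc_add_def by blast
    then show "sc_add B C \<noteq> {}" by auto
  next
    fix t assume "t \<in> sc_add B C"
    then obtain b c where b: "b \<in> B" and c: "c \<in> C" and t: "t = b + c" unfolding sc_add_def by blast
    have dj: "inf (rabs b) w = 0" using wB b rabs_pos[OF w0] by (auto simp: dcompl_def rdisj_def)
    have "inf w (b + c) \<le> inf w (rabs b + sup c 0)"
      by (intro inf_mono order_refl add_mono rabs_ge sup_ge1)
    also have "\<dots> \<le> inf w (rabs b) + inf w (sup c 0)"
      by (intro riesz_ineq w0 rabs_nonneg) simp
    also have "\<dots> = inf w (sup c 0)" using dj by (simp add: inf_commute)
    finally have 1: "inf w (b + c) \<le> sup c 0" by simp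
    have 2: "inf ?x' t \<le> inf w (b + c)" unfolding t by (rule inf_mono[OF inf_le2 order_refl])
    have 3: "inf ?x' t \<le> x" by (rule le_infI1[OF inf_le1])
    have "inf ?x' t \<le> inf x (sup c 0)"
      using order_trans[OF 2 1] 3 by (intro le_infI)
    also have "\<dots> = sup (inf x c) (inf x 0)" by (rule inf_sup_distr)
    also have "\<dots> \<le> meet_sup x C"
      by (intro sup_least meet_sup_upper c sc_pos_D Cpos)
    finally show "inf ?x' t \<le> meet_sup x C" .
  qed
  finally show "inf x w \<le> meet_sup x C" .
qed

lemma le_A_of_B: fixes v :: "'a::{ordered_real_vector, conditionally_complete_lattice}"
  assumes eq: "sc_eq A (sc_add B C)" and Cne: "C \<noteq> {}" and Cpos: "sc_pos C" and v: "v \<in> B"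
  shows "inf x v \<le> meet_sup x A"
proof -
  let ?M = "meet_sup x A"
  have M: "?M = meet_sup x (sc_add B C)" using eq by (simp add: sc_eq_def)
  have "inf (x - v) c \<le> ?M - v" if c: "c \<in> C" for c
  proof -
    have "v + c \<in> sc_add B C" using v c unfolding sc_add_def by blast
    then have "inf x (v + c) \<le> ?M" unfolding M by (rule meet_sup_upper)
    moreover have "inf x (v + c) = inf (x - v) c + v"
      using inf_add_r[of "x - v" v c] by (simp add: add.commute)
    ultimately show ?thesis by (simp add: le_diff_eq)
  qed
  then have "meet_sup (x - v) C \<le> ?M - v" by (intro meet_sup_least Cne)
  moreover have "inf (x - v) 0 \<le> meet_sup (x - v) C" by (rule sc_pos_D[OF Cpos])
  moreover have "inf (x - v) 0 = inf x v - v"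
    using inf_add_r[of "x - v" v 0] by simp
  ultimately have "inf x v - v \<le> ?M - v" by (metis order_trans)
  then show ?thesis by simp
qed

lemma le_A_pluspart: fixes v t :: "'a::{ordered_real_vector, conditionally_complete_lattice}"
  assumes Ane: "A \<noteq> {}" and vA: "\<And>x. inf x v \<le> meet_sup x A"
  shows "inf x (sup (v - t) 0) \<le> meet_sup x ((\<lambda>a. sup (a - t) 0) ` A)"
proof -
  let ?V = "(inf v) ` A"
  have Vne: "?V \<noteq> {}" using Ane by auto
  have Vbd: "bdd_above ?V" by (rule meet_sup_bdd)
  have vV: "v = Sup ?V"
  proof (rule antisym)
    show "v \<le> Sup ?V" using vA[of v] by (simp add: meet_sup_def)
    show "Sup ?V \<le> v" using Ane by (intro cSUP_least) auto
  qed
  let ?W = "(\<lambda>s. s + (- t)) ` ?V"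
  have Wne: "?W \<noteq> {}" using Vne by auto
  have Wbd: "bdd_above ?W" by (rule bdd_aboveI[of _ "v + - t"]) (auto intro: add_right_mono)
  have 1: "v - t = Sup ?W" using Sup_translate[OF Vne Vbd, of "- t"] vV by simp
  let ?Z = "(\<lambda>s. sup s 0) ` ?W"
  have Zne: "?Z \<noteq> {}" using Wne by auto
  have Zbd: "bdd_above ?Z"
    by (rule bdd_aboveI[of _ "sup (v - t) 0"]) (auto intro: sup_mono add_right_mono)
  have 2: "sup (v - t) 0 = Sup ?Z" unfolding 1 by (rule sup_Sup[OF Wne Wbd])
  have "inf x (sup (v - t) 0) = Sup ((inf x) ` ?Z)" unfolding 2 by (rule inf_Sup[OF Zne Zbd])
  also have "\<dots> \<le> meet_sup x ((\<lambda>a. sup (a - t) 0) ` A)"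
  proof (rule cSup_least)
    show "(inf x) ` ?Z \<noteq> {}" using Zne by auto
  next
    fix q assume "q \<in> (inf x) ` ?Z"
    then obtain a where a: "a \<in> A" and q: "q = inf x (sup (inf v a + - t) 0)" by auto
    have "q \<le> inf x (sup (a - t) 0)" unfolding q
      by (intro inf_mono order_refl sup_mono) (auto intro: add_right_mono)
    also have "\<dots> \<le> meet_sup x ((\<lambda>a. sup (a - t) 0) ` A)" using a by (intro meet_sup_upper) auto
    finally show "q \<le> meet_sup x ((\<lambda>a. sup (a - t) 0) ` A)" .
  qed
  finally show ?thesis .
qed



lemma B_sub_G: fixes e :: "'a::{ordered_real_vector, conditionally_complete_lattice}"
  assumes e: "0 \<le> e" and B: "band B" and eq: "sc_eq A (sc_add B C)" and Cne: "C \<noteq> {}"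
    and Cpos: "sc_pos C" and Ane: "A \<noteq> {}" and G: "band G"
    and SG: "sc_below (sc_pluspart A k e) \<subseteq> G" and b: "b \<in> B" and b0: "0 \<le> b"
  shows "b \<in> G"
proof -
  define c where "c m = real k / real (Suc m)" for m
  define tt where "tt m = sup (b - c m *\<^sub>R e) 0" for m
  have c0: "0 \<le> c m" for m unfolding c_def by simp
  have ttG: "tt m \<in> G" for m
  proof -
    define v where "v = real (Suc m) *\<^sub>R b"
    have vB: "v \<in> B" unfolding v_def by (rule ideal_scale[OF band_ideal[OF B] b])
    define y where "y = sup (v - real k *\<^sub>R e) 0"
    have "y \<in> sc_below (sc_pluspart A k e)"
      unfolding sc_below_def sc_le_def sc_pluspart_def meet_sup_single
    proof (intro CollectI conjI allI)
      show "0 \<le> y" by (simp add: y_def)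
      fix x show "inf x y \<le> meet_sup x ((\<lambda>a. sup (a - real k *\<^sub>R e) 0) ` A)"
        unfolding y_def by (rule le_A_pluspart[OF Ane le_A_of_B[OF eq Cne Cpos vB]])
    qed
    then have "y \<in> G" using SG by auto
    then have "inverse (real (Suc m)) *\<^sub>R y \<in> G" by (rule ideal_scale[OF band_ideal[OF G]])
    moreover have "inverse (real (Suc m)) *\<^sub>R y = tt m"
    proof -
      have "inverse (real (Suc m)) *\<^sub>R y
          = sup (inverse (real (Suc m)) *\<^sub>R (v - real k *\<^sub>R e)) (inverse (real (Suc m)) *\<^sub>R 0)"
        unfolding y_def by (rule scale_sup) simp
      also have "\<dots> = tt m" unfolding tt_def v_def c_def
        by (simp add: scaleR_diff_right divide_inverse_commute)
      finally show ?thesis .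
    qed
    ultimately show ?thesis by simp
  qed
  let ?D = "range tt"
  have ttb: "tt m \<le> b" for m
    unfolding tt_def using b0 scaleR_nonneg_nonneg[OF c0 e] by (intro sup_least) auto
  have bd: "bdd_above ?D" by (rule bdd_aboveI[of _ b]) (auto intro: ttb)
  define s where "s = Sup ?D"
  have sG: "s \<in> G" unfolding s_def by (rule band_Sup[OF G _ _ bd]) (use ttG in auto)
  have sb: "s \<le> b" unfolding s_def by (intro cSUP_least ttb) auto
  have "b - s = 0"
  proof (rule archimedean)
    show "0 \<le> b - s" using sb by simp
    fix n :: nat
    show "real n *\<^sub>R (b - s) \<le> real k *\<^sub>R e"
    proof (cases n)
      case 0 then show ?thesis using e by (simp add: scaleR_nonneg_nonneg)
    next
      case (Suc m)
      have "tt m \<le> s" unfolding s_def by (intro cSUP_upper bd) auto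
      then have "b - s \<le> b - tt m" by simp
      also have "b - tt m = inf (c m *\<^sub>R e) b" unfolding tt_def diff_sup by simp
      also have "\<dots> \<le> c m *\<^sub>R e" by simp
      finally have "b - s \<le> c m *\<^sub>R e" .
      then have "real n *\<^sub>R (b - s) \<le> real n *\<^sub>R (c m *\<^sub>R e)"
        by (intro scaleR_left_mono) auto
      also have "real n *\<^sub>R (c m *\<^sub>R e) = real k *\<^sub>R e"
        unfolding c_def Suc by simp
      finally show ?thesis .
    qed
  qed
  then show ?thesis using sG by simp
qed

theorem theoremT5:
  fixes e :: "'a::{ordered_real_vector, conditionally_complete_lattice}"
    and A B :: "'a set"
  assumes "weak_unit e"
    and "up_directed A" and "sc_pos A"
    and "inf_part_band A B"
  shows "(INF k\<in>{1::nat..}. band_proj (band_gen (sc_below (sc_pluspart A k e))) e)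
           = band_proj B e"
proof -
  have e: "0 \<le> e" using assms(1) by (simp add: weak_unit_def)
  have Ane: "A \<noteq> {}" using assms(2) by (simp add: up_directed_def)
  have B: "band B" using assms(4) by (simp add: inf_part_band_def)
  obtain C where Cdir: "up_directed C" and Cpos: "sc_pos C" and Cfin: "sc_finite C"
    and eq: "sc_eq A (sc_add B C)"
    using assms(4) unfolding inf_part_band_def by blast
  have Cne: "C \<noteq> {}" using Cdir by (simp add: up_directed_def)
  define G where "G k = band_gen (sc_below (sc_pluspart A k e))" for k
  define p where "p k = band_proj (G k) e" for k
  define pB where "pB = band_proj B e"
  have G: "band (G k)" for k unfolding G_def by (rule band_gen_band)
  have pk: "p k \<in> G k" "e - p k \<in> dcompl (G k)" "0 \<le> p k" "p k \<le> e" for k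
    using band_proj[OF G e] unfolding p_def by auto
  have pBp: "pB \<in> B" "e - pB \<in> dcompl B" "0 \<le> pB" "pB \<le> e"
    using band_proj[OF B e] unfolding pB_def by auto
  have BG: "B \<subseteq> G k" for k
  proof
    fix b assume b: "b \<in> B"
    have "b \<in> H" if H: "band H" "sc_below (sc_pluspart A k e) \<subseteq> H" for H
    proof -
      have "rabs b \<in> H"
        by (rule B_sub_G[OF e B eq Cne Cpos Ane H ideal_rabs[OF band_ideal[OF B] b] rabs_nonneg])
      then show ?thesis by (rule ideal_rabsD[OF band_ideal[OF H(1)]])
    qed
    then show "b \<in> G k" unfolding G_def band_gen_def by blast
  qed
  have pBle: "pB \<le> p k" for k
    unfolding p_def by (rule proj_max[OF G e]) (use BG pBp in auto)
  define z where "z = (INF k\<in>{1::nat..}. p k)"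
  have ne1: "{1::nat..} \<noteq> {}" by auto
  have bdb: "bdd_below (p ` {1..})" by (rule bdd_belowI[of _ 0]) (use pk in auto)
  have z1: "pB \<le> z" unfolding z_def by (rule cINF_greatest[OF ne1 pBle])
  have z0: "0 \<le> z" unfolding z_def by (rule cINF_greatest[OF ne1]) (use pk in auto)
  have zp: "z \<le> p k" if "1 \<le> k" for k unfolding z_def by (rule cINF_lower[OF bdb]) (use that in auto)
  have ze: "z \<le> e" using zp[of 1] pk(4)[of 1] by simp
  define z1 where "z1 = band_proj B z"
  have z1p: "z1 \<in> B" "z - z1 \<in> dcompl B" "0 \<le> z1" "z1 \<le> z"
    using band_proj[OF B z0] unfolding z1_def by auto
  define z2 where "z2 = z - z1"
  have z2B: "z2 \<in> dcompl B" and z20: "0 \<le> z2" and z2z: "z2 \<le> z"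
    using z1p unfolding z2_def by auto
  have z1B: "z1 \<le> pB" unfolding pB_def
    by (rule proj_max[OF B e]) (use z1p ze in auto)
  have all: "sc_le {real n *\<^sub>R z2} C" for n
  proof (cases n)
    case 0 then show ?thesis using Cpos by (simp add: sc_pos_def)
  next
    case (Suc n')
    define k where "k = n"
    have k1: "1 \<le> k" unfolding k_def Suc by simp
    define m where "m = meet_sup (real k *\<^sub>R e) A"
    define r where "r = real k *\<^sub>R e - m"
    have ke: "0 \<le> real k *\<^sub>R e" using e by (simp add: scaleR_nonneg_nonneg)
    have m0: "0 \<le> m" using sc_pos_D[OF assms(3), of "real k *\<^sub>R e"] ke unfolding m_def
      by (simp add: inf_absorb2)
    have mle: "m \<le> real k *\<^sub>R e" unfolding m_def by (rule meet_sup_le_x[OF Ane])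
    have r0: "0 \<le> r" using mle by (simp add: r_def)
    have "sc_below (sc_pluspart A k e) \<subseteq> dcompl {r}"
    proof
      fix y assume "y \<in> sc_below (sc_pluspart A k e)"
      then have y0: "0 \<le> y" and yle: "\<And>x. inf x y \<le> meet_sup x (sc_pluspart A k e)"
        unfolding sc_below_def sc_le_def meet_sup_single by auto
      have "inf r y = inf (inf r y) y" by (simp add: inf.absorb1 inf_assoc)
      also have "\<dots> \<le> meet_sup (inf r y) (sc_pluspart A k e)" by (rule yle)
      also have "\<dots> \<le> 0"
      proof (rule meet_sup_least)
        show "sc_pluspart A k e \<noteq> {}" using Ane by (simp add: sc_pluspart_def)
        fix a' assume "a' \<in> sc_pluspart A k e"
        then obtain a where a: "a \<in> A" and a': "a' = sup (a - real k *\<^sub>R e) 0"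
          by (auto simp: sc_pluspart_def)
        have "inf (real k *\<^sub>R e) a \<le> m" unfolding m_def by (rule meet_sup_upper[OF a])
        then have "r \<le> real k *\<^sub>R e - inf (real k *\<^sub>R e) a" unfolding r_def by simp
        also have "\<dots> = sup 0 (real k *\<^sub>R e - a)" by (simp add: diff_inf)
        finally have rle: "r \<le> sup (- (a - real k *\<^sub>R e)) 0" by (simp add: sup_commute)
        have "inf (inf r y) a' \<le> inf (sup (- (a - real k *\<^sub>R e)) 0) a'"
          by (intro inf_mono order_refl le_infI1 rle)
        also have "\<dots> = 0" unfolding a' by (subst inf_commute) (rule pos_neg_disj)
        finally show "inf (inf r y) a' \<le> 0" .
      qed
      finally have "inf r y = 0" using r0 y0 by (intro antisym) auto
      then show "y \<in> dcompl {r}" unfolding dcompl_def using r0 y0 by (simp add: rdisj_pos)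
    qed
    then have "G k \<subseteq> dcompl {r}" unfolding G_def by (rule band_gen_least[OF dcompl_band])
    then have "p k \<in> dcompl {r}" using pk(1) by auto
    then have rp: "inf r (p k) = 0" using r0 pk(3) by (simp add: dcompl_def rdisj_pos)
    have kp: "real k *\<^sub>R p k \<le> m"
    proof (rule disj_le[of _ m r])
      show "0 \<le> real k *\<^sub>R p k" using pk(3) by (simp add: scaleR_nonneg_nonneg)
      show "0 \<le> m" by (rule m0)
      show "0 \<le> r" by (rule r0)
      have "real k *\<^sub>R p k \<le> real k *\<^sub>R e" by (intro scaleR_left_mono pk(4)) simp
      then show "real k *\<^sub>R p k \<le> m + r" by (simp add: r_def)
      have "r \<le> real k *\<^sub>R r" using scaleR_right_mono[of 1 "real k" r] k1 r0 by simp
      then have "inf (real k *\<^sub>R p k) r \<le> inf (real k *\<^sub>R p k) (real k *\<^sub>R r)"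
        by (intro inf_mono) auto
      also have "\<dots> = real k *\<^sub>R inf (p k) r" by (simp add: scale_inf)
      also have "\<dots> = 0" using rp by (simp add: inf_commute)
      finally show "inf (real k *\<^sub>R p k) r = 0"
        using pk(3) r0 by (intro antisym) (auto simp: scaleR_nonneg_nonneg)
    qed
    define w where "w = real n *\<^sub>R z2"
    have w0: "0 \<le> w" unfolding w_def using z20 by (simp add: scaleR_nonneg_nonneg)
    have wB: "w \<in> dcompl B" unfolding w_def by (rule ideal_scale[OF dcompl_ideal z2B])
    have "z2 \<le> p k" using z2z zp[OF k1] by simp
    then have wm: "w \<le> m" unfolding w_def k_def[symmetric]
      using kp by (meson order_trans scaleR_left_mono of_nat_0_le_iff)
    have wA: "inf x w \<le> meet_sup x A" for x
    proof -
      have "inf x w \<le> inf x m" using wm by (intro inf_mono) auto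
      also have "\<dots> = Sup ((inf x) ` (inf (real k *\<^sub>R e)) ` A)"
        unfolding m_def meet_sup_def by (rule inf_Sup[OF _ meet_sup_bdd]) (use Ane in auto)
      also have "\<dots> \<le> meet_sup x A"
      proof (rule cSup_least)
        show "(inf x) ` (inf (real k *\<^sub>R e)) ` A \<noteq> {}" using Ane by auto
        fix q assume "q \<in> (inf x) ` (inf (real k *\<^sub>R e)) ` A"
        then obtain a where a: "a \<in> A" and q: "q = inf x (inf (real k *\<^sub>R e) a)" by auto
        have "q \<le> inf x a" unfolding q by (intro inf_mono) auto
        also have "\<dots> \<le> meet_sup x A" by (rule meet_sup_upper[OF a])
        finally show "q \<le> meet_sup x A" .
      qed
      finally show ?thesis .
    qed
    show ?thesis unfolding w_def[symmetric] by (rule step2[OF eq B Cne Cpos w0 wB wA])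
  qed
  have "z2 = 0"
  proof (rule ccontr)
    assume "z2 \<noteq> 0"
    then have "0 < z2" using z20 by (simp add: order_less_le)
    then show False using Cfin all unfolding sc_finite_def by blast
  qed
  then have "z = z1" unfolding z2_def by simp
  then have "z \<le> pB" using z1B by simp
  then show ?thesis using z1 unfolding z_def p_def G_def pB_def by simp
qed

end
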